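(* Let $m\ge 2$, let $C=uRM(m)$ (defined in the context) with base qubits $b_0,\dots,b_m$ and parity labels $L(q)$. Then $C$ is an $(m-1)$-parity code: for every subset $K\subseteq\{0,\dots,m\}$ with $|K|=m-1$, the number of qubits $q$ with $K\subseteq L(q)$ is even.
   Context: Let $a=\lceil m/2\rceil$, $b=\lfloor m/2\rfloor$. Place $2^m$ bits (qubits) on a grid with $2^b$ rows and $2^a$ columns, positions $(i,j)$, row $1$ on top, column $1$ leftmost. Bulk checks: for $1\le i<2^b$, $1\le j<2^a$, the set $\{(i,j),(i+1,j),(i,j+1),(i+1,j+1)\}$. Boundary checks: for a line of $L=2^n$ positions $1,\dots,L$, each $s\in\{1,\dots,n-1\}$, $w=2^s$, and integer $t$ with $-L/(2w)+1\le t\le L/(2w)-1$, $S(w,t)=\{L/2-w/2+wt,\ L/2-w/2+wt+1,\ L/2+w/2+wt,\ L/2+w/2+wt+1\}$; these with $n=a$ on the top row ($j\mapsto(1,j)$) and with $n=b$ on the leftmost column ($i\mapsto(i,1)$). $C=uRM(m)$ is the set of $x\in\mathbb{F}_2^{2^m}$ with even sum over every check; it has dimension $m+1$. Base qubits are $m+1$ positions $b_0,\dots,b_m$ such that $x\mapsto(x_{b_0},\dots,x_{b_m})$ is a bijection $C\to\mathbb{F}_2^{m+1}$. The parity label of a qubit $q$ is the unique $L(q)\subseteq\{0,\dots,m\}$ with $x_q=\sum_{i\in L(q)}x_{b_i}$ for all $x\in C$. A code with such labels is called $k$-parity if for every $k$-element subset $K$ of the label indices, the number of qubits whose label contains $K$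 is even. *)

theory Defs
  imports Main "HOL-Library.FuncSet"
begin

(* a = ceil(m/2) columns exponent, b = floor(m/2) rows exponent *)
definition colexp :: "nat \<Rightarrow> nat" where "colexp m = (m + 1) div 2"
definition rowexp :: "nat \<Rightarrow> nat" where "rowexp m = m div 2"

definition grid :: "nat \<Rightarrow> (nat \<times> nat) set" where
  "grid m = {1..2 ^ rowexp m} \<times> {1..2 ^ colexp m}"

definition bulk_checks :: "nat \<Rightarrow> (nat \<times> nat) set set" where
  "bulk_checks m = {{(i,j),(i+1,j),(i,j+1),(i+1,j+1)} | i j.
      1 \<le> i \<and> i < 2 ^ rowexp m \<and> 1 \<le> j \<and> j < 2 ^ colexp m}"

definition S_set :: "nat \<Rightarrow> nat \<Rightarrow> int \<Rightarrow> nat set" where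
  "S_set n s t = (let L = (2::int) ^ n; w = (2::int) ^ s in
     nat ` {L div 2 - w div 2 + w * t, L div 2 - w div 2 + w * t + 1,
            L div 2 + w div 2 + w * t, L div 2 + w div 2 + w * t + 1})"

definition line_checks :: "nat \<Rightarrow> nat set set" where
  "line_checks n = {S_set n s t | s t. 1 \<le> s \<and> s \<le> n - 1 \<and>
      - ((2::int) ^ n div (2 * 2 ^ s)) + 1 \<le> t \<and> t \<le> (2::int) ^ n div (2 * 2 ^ s) - 1}"

definition boundary_checks :: "nat \<Rightarrow> (nat \<times> nat) set set" where
  "boundary_checks m =
     ((\<lambda>S. (\<lambda>j. (1::nat, j)) ` S) ` line_checks (colexp m)) \<union>
     ((\<lambda>S. (\<lambda>i. (i, 1::nat)) ` S) ` line_checks (rowexp m))"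

definition checks :: "nat \<Rightarrow> (nat \<times> nat) set set" where
  "checks m = bulk_checks m \<union> boundary_checks m"

(* bit vectors over F_2 = bool, supported on the grid *)
definition uRM :: "nat \<Rightarrow> ((nat \<times> nat) \<Rightarrow> bool) set" where
  "uRM m = {x. (\<forall>q. q \<notin> grid m \<longrightarrow> \<not> x q) \<and>
               (\<forall>S\<in>checks m. even (card {q\<in>S. x q}))}"

definition is_base :: "nat \<Rightarrow> (nat \<Rightarrow> nat \<times> nat) \<Rightarrow> bool" where
  "is_base m bq \<longleftrightarrow> (\<forall>i\<in>{0..m}. bq i \<in> grid m) \<and>
     bij_betw (\<lambda>x. restrict (\<lambda>i. x (bq i)) {0..m}) (uRM m) ({0..m} \<rightarrow>\<^sub>E (UNIV::bool set))"

definition parity_label :: "nat \<Rightarrow> (nat \<Rightarrow> nat \<times> nat) \<Rightarrow> nat \<times> nat \<Rightarrow> nat set" where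
  "parity_label m bq q = (THE L. L \<subseteq> {0..m} \<and>
     (\<forall>x\<in>uRM m. x q = odd (card {i\<in>L. x (bq i)})))"

end

theory Submission
  imports Defs
begin


definition oc :: "'a set \<Rightarrow> ('a \<Rightarrow> bool) \<Rightarrow> bool" where
  "oc A P = odd (card {k\<in>A. P k})"

lemma Collect_insert_if: "{q\<in>insert p A. P q} = (if P p then insert p {q\<in>A. P q} else {q\<in>A. P q})"
  by auto

lemma Collect_empty_mem: "{q\<in>{}. P q} = {}" by auto

lemma oc_xor: assumes "finite A" shows "oc A (\<lambda>k. P k \<noteq> Q k) = (oc A P \<noteq> oc A Q)"
  using assms
proof (induction A rule: finite_induct)
  case empty then show ?case by (simp add: oc_def)
next
  case (insert x F)
  then show ?case unfolding oc_def Collect_insert_if by (cases "P x"; cases "Q x") simp_all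
qed

lemma oc_false[simp]: "oc A (\<lambda>_. False) = False" by (simp add: oc_def)

lemma card4_even:
  assumes "distinct [p1,p2,p3,p4]"
  shows "even (card {q\<in>{p1,p2,p3,p4}. x q}) = ((x p1 \<noteq> x p2) = (x p3 \<noteq> x p4))"
  using assms unfolding Collect_insert_if Collect_empty_mem by (cases "x p1"; cases "x p2"; cases "x p3"; cases "x p4") simp_all

lemma bit_split: "r < 2^b \<Longrightarrow> bit (r + 2^b * t) k = (if k < b then bit r k else bit (t::nat) (k - b))"
proof (induction b arbitrary: r k)
  case 0 then show ?case by simp
next
  case (Suc b)
  have e: "(r + 2 ^ Suc b * t) div 2 = r div 2 + 2^b * t" by simp
  have l: "r div 2 < 2^b" using Suc.prems by simp
  show ?case
  proof (cases k)
    case 0 then show ?thesis by (simp add: bit_0)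
  next
    case (Suc k') then show ?thesis using Suc.IH[OF l, of k'] e by (simp add: bit_Suc)
  qed
qed

lemma carry_bits: "A mod 2^(Suc r) = 2^r - 1 \<Longrightarrow> (bit (A::nat) k \<noteq> bit (A+1) k) = (k \<le> r)"
proof (induction r arbitrary: A k)
  case 0
  then have ev: "even A" by simp presburger
  show ?case
  proof (cases k)
    case 0 then show ?thesis using ev by (simp add: bit_0)
  next
    case (Suc k') 
    have "(A+1) div 2 = A div 2" using ev by presburger
    then show ?thesis using Suc by (simp add: bit_Suc)
  qed
next
  case (Suc r)
  have od: "odd A"
  proof -
    have "A mod 2 = (A mod 2^(Suc (Suc r))) mod 2" by (simp add: mod_mod_cancel)
    moreover have "2*2^r - Suc 0 = 2*(2^r - 1) + (1::nat)" using one_le_power[of "2::nat" r] by linarith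
    ultimately show ?thesis using Suc.prems by simp presburger
  qed
  have h: "(A div 2) mod 2^(Suc r) = 2^r - 1"
  proof -
    have "(A div 2) mod 2^(Suc r) = (A mod 2^(Suc (Suc r))) div 2"
      by (metis div_exp_mod_exp_eq power_one_right plus_1_eq_Suc)
    also have "\<dots> = 2^r - 1" using Suc.prems by simp
    finally show ?thesis .
  qed
  have d: "(A+1) div 2 = A div 2 + 1" using od by presburger
  show ?case
  proof (cases k)
    case 0 then show ?thesis using od by (simp add: bit_0)
  next
    case (Suc k')
    then show ?thesis using Suc.IH[OF h, of k'] d by (simp add: bit_Suc)
  qed
qed

lemma even_involution:
  assumes "finite T" "\<forall>z\<in>T. \<sigma> z \<in> T \<and> \<sigma> z \<noteq> z \<and> \<sigma> (\<sigma> z) = z"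
  shows "even (card T)"
  using assms
proof (induction "card T" arbitrary: T rule: less_induct)
  case less
  show ?case
  proof (cases "T = {}")
    case True then show ?thesis by simp
  next
    case False
    then obtain z where z: "z \<in> T" by blast
    have sz: "\<sigma> z \<in> T" "\<sigma> z \<noteq> z" using z less.prems by auto
    define T' where "T' = T - {z, \<sigma> z}"
    have sub: "{z, \<sigma> z} \<subseteq> T" using z sz by auto
    have c2: "card {z, \<sigma> z} = 2" using sz by simp
    have c: "card T' = card T - 2" unfolding T'_def
      using card_Diff_subset[OF _ sub] c2 by simp
    have ge: "card T \<ge> 2" using card_mono[OF less.prems(1) sub] c2 by simp
    have fin': "finite T'" using less.prems unfolding T'_def by simp
    have cl: "\<forall>w\<in>T'. \<sigma> w \<in> T' \<and> \<sigma> w \<noteq> w \<and> \<sigma> (\<sigma> w) = w"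
    proof
      fix w assume w: "w \<in> T'"
      then have wT: "w \<in> T" "w \<noteq> z" "w \<noteq> \<sigma> z" unfolding T'_def by auto
      have p: "\<sigma> w \<in> T" "\<sigma> w \<noteq> w" "\<sigma> (\<sigma> w) = w" using wT(1) less.prems(2) by auto
      have pz: "\<sigma> (\<sigma> z) = z" using z less.prems(2) by auto
      have "\<sigma> w \<noteq> z" using p(3) wT(3) by auto
      moreover have "\<sigma> w \<noteq> \<sigma> z" using p(3) pz wT(2) by metis
      ultimately show "\<sigma> w \<in> T' \<and> \<sigma> w \<noteq> w \<and> \<sigma> (\<sigma> w) = w"
        using p unfolding T'_def by auto
    qed
    have "even (card T')"
      using less.hyps[of T'] c ge fin' cl by simp
    then show ?thesis using c ge by presburger
  qed
qed



lemma S_set_explicit: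
  assumes "1 \<le> s" "s \<le> n - 1" "-((2::int)^n div (2*2^s)) + 1 \<le> t" "t \<le> (2::int)^n div (2*2^s) - 1"
  shows "\<exists>r T. S_set n s t = {2^r + 2*2^r*T, 2^r + 2*2^r*T + 1, 2^r + 2*2^r*T + 2*2^r, 2^r + 2*2^r*T + 2*2^r + 1}
      \<and> 2^r + 2*2^r*T + 2*2^r + 1 \<le> (2::nat)^n"
proof -
  obtain r where s: "s = Suc r" using assms(1) by (cases s) auto
  define e where "e = n - Suc (Suc r)"
  have n: "n = Suc (Suc (r + e))" using assms(2) s unfolding e_def by arith
  define U where "U = (2::int)^r"
  define V where "V = (2::int)^e"
  have U1: "U \<ge> 1" "V \<ge> 1" unfolding U_def V_def by simp_all
  have pn: "(2::int)^n = 4 * U * V" unfolding n U_def V_def by (simp add: power_add)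
  have d1: "(2::int)^n div 2 = 2 * U * V" unfolding pn by simp
  have d2: "(2::int)^s div 2 = U" unfolding s U_def by simp
  have d3: "(2::int)^n div (2 * 2^s) = V"
  proof -
    have "(2::int)^n = (2 * 2^s) * V" unfolding pn s U_def by simp
    then show ?thesis by simp
  qed
  have ws: "(2::int)^s = 2 * U" unfolding s U_def by simp
  define T0 where "T0 = t + V - 1"
  have T0: "0 \<le> T0" "T0 \<le> 2 * V - 2" using assms(3,4) unfolding d3 T0_def by simp_all
  define T where "T = nat T0"
  define P where "P = (2::nat)^r + 2*2^r*T"
  have iP: "int P = U + 2 * U * T0" unfolding P_def T_def U_def using T0 by simp
  have X: "2 * U * V - U + 2 * U * t = int P" unfolding iP T0_def by (simp add: algebra_simps)
  have Y: "2 * U * V + U + 2 * U * t = int (P + 2*2^r) " using X unfolding U_def by simp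
  have S: "S_set n s t = nat ` {int P, int (P+1), int (P + 2*2^r), int (P + 2*2^r + 1)}"
    unfolding S_set_def Let_def d1 d2 ws using X Y by (simp add: algebra_simps)
  have S2: "S_set n s t = {P, P+1, P + 2*2^r, P + 2*2^r + 1}"
    unfolding S by (simp only: image_insert image_empty nat_int)
  have "2 * U * (T0 + 1) \<le> 2 * U * (2 * V - 1)"
    using T0 U1 by (intro mult_left_mono) auto
  then have "U + 2 * U * T0 + 2 * U + 1 \<le> 4 * U * V" using U1 by (simp add: algebra_simps)
  then have "int (P + 2*2^r + 1) \<le> int (2^n)" unfolding pn[symmetric] using iP unfolding U_def by simp
  then have "P + 2*2^r + 1 \<le> 2^n" by linarith
  then show ?thesis using S2 unfolding P_def by blast
qed


lemma rc: "rowexp m + colexp m = m" unfolding rowexp_def colexp_def by presburger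

lemma rc2: "(2::nat)^rowexp m * 2^colexp m = 2^m"
  by (metis power_add rc)

definition zz :: "nat \<Rightarrow> nat \<times> nat \<Rightarrow> nat" where
  "zz m q = (fst q - 1) + 2 ^ rowexp m * (snd q - 1)"
definition pos :: "nat \<Rightarrow> nat \<Rightarrow> nat \<times> nat" where
  "pos m z = (z mod 2 ^ rowexp m + 1, z div 2 ^ rowexp m + 1)"
definition aff :: "nat \<Rightarrow> bool \<Rightarrow> nat set \<Rightarrow> (nat \<times> nat \<Rightarrow> bool)" where
  "aff m c \<alpha> q = (q \<in> grid m \<and> (c \<noteq> oc \<alpha> (bit (zz m q))))"

lemma zz_pos: assumes "z < 2^m" shows "pos m z \<in> grid m" "zz m (pos m z) = z"
proof -
  have "z div 2^rowexp m < 2^colexp m" using assms rc2[of m]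
    by (simp add: less_mult_imp_div_less mult.commute)
  moreover have "z mod 2^rowexp m < 2^rowexp m" by simp
  ultimately have "z mod 2^rowexp m + 1 \<le> 2^rowexp m" "z div 2^rowexp m + 1 \<le> 2^colexp m" by linarith+
  then show "pos m z \<in> grid m" unfolding pos_def grid_def by auto
  show "zz m (pos m z) = z" unfolding pos_def zz_def by simp
qed

lemma pos_zz: assumes "q \<in> grid m" shows "zz m q < 2^m" "pos m (zz m q) = q"
proof -
  obtain i j where q: "q = (i,j)" "1 \<le> i" "i \<le> 2^rowexp m" "1 \<le> j" "j \<le> 2^colexp m"
    using assms unfolding grid_def by auto
  have "i - 1 + 2^rowexp m * (j - 1) < 2^rowexp m + 2^rowexp m * (j - 1)" using q by simp
  also have "\<dots> = 2^rowexp m * j" using q(4) by (cases j) auto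
  also have "\<dots> \<le> 2^rowexp m * 2^colexp m" using q by simp
  finally show "zz m q < 2^m" unfolding zz_def q rc2 by simp
  obtain i' j' where ij: "i = Suc i'" "j = Suc j'" using q by (cases i; cases j) auto
  have l: "i' < 2^rowexp m" using q ij by simp
  show "pos m (zz m q) = q" unfolding pos_def zz_def q ij using l by simp
qed

lemma zz_bij: "bij_betw (zz m) (grid m) {0..<2^m}"
  by (rule bij_betw_byWitness[where f'="pos m"]) (auto simp: pos_zz zz_pos)

lemma bit_zz: assumes "(i,j) \<in> grid m"
  shows "bit (zz m (i,j)) k = (if k < rowexp m then bit (i-1) k else bit (j-1) (k - rowexp m))"
proof -
  have "i - 1 < 2^rowexp m" using assms unfolding grid_def by auto
  then show ?thesis unfolding zz_def by (simp add: bit_split)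
qed

lemma oc_bot[simp]: "oc A bot = False" by (simp add: oc_def)

lemma aff_pos: "z < 2^m \<Longrightarrow> aff m c \<alpha> (pos m z) = (c \<noteq> oc \<alpha> (bit z))"
  unfolding aff_def using zz_pos by simp

lemma aff_inj: assumes "\<alpha> \<subseteq> {0..<m}" "\<alpha>' \<subseteq> {0..<m}" "aff m c \<alpha> = aff m c' \<alpha>'"
  shows "c = c' \<and> \<alpha> = \<alpha>'"
proof -
  have b0: "bit (0::nat) = bot" by (rule ext) simp
  have z0: "(0::nat) < 2^m" by simp
  have "aff m c \<alpha> (pos m 0) = aff m c' \<alpha>' (pos m 0)" by (simp only: assms(3))
  then have "(c \<noteq> oc \<alpha> (bit (0::nat))) = (c' \<noteq> oc \<alpha>' (bit (0::nat)))" by (simp only: aff_pos[OF z0])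
  then have cc: "c = c'" by (simp only: b0 oc_bot) simp
  have kk: "k \<in> \<alpha> \<longleftrightarrow> k \<in> \<alpha>'" if k: "k < m" for k
  proof -
    have lt: "(2::nat)^k < 2^m" using k by simp
    have bk: "bit ((2::nat)^k) = (\<lambda>k'. k' = k)" by (rule ext) (simp add: bit_exp_iff)
    have o: "oc A (\<lambda>k'. k' = k) = (k \<in> A)" for A :: "nat set"
    proof -
      have "{k'\<in>A. k' = k} = (if k \<in> A then {k} else {})" by auto
      then show ?thesis unfolding oc_def by simp
    qed
    have "aff m c \<alpha> (pos m (2^k)) = aff m c' \<alpha>' (pos m (2^k))" by (simp only: assms(3))
    then have "(c \<noteq> oc \<alpha> (bit ((2::nat)^k))) = (c' \<noteq> oc \<alpha>' (bit ((2::nat)^k)))" by (simp only: aff_pos[OF lt])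
    then have "(c \<noteq> (k\<in>\<alpha>)) = (c' \<noteq> (k\<in>\<alpha>'))" by (simp only: bk o)
    with cc show ?thesis by blast
  qed
  have "\<alpha> = \<alpha>'"
  proof (rule set_eqI)
    fix k show "k \<in> \<alpha> \<longleftrightarrow> k \<in> \<alpha>'"
      using kk[of k] assms(1,2) by (cases "k < m") auto
  qed
  then show ?thesis using cc by simp
qed

definition Aff :: "nat \<Rightarrow> ((nat \<times> nat) \<Rightarrow> bool) set" where
  "Aff m = (\<lambda>p. aff m (fst p) (snd p)) ` (UNIV \<times> Pow {0..<m})"

lemma card_Aff: "card (Aff m) = 2^(m+1)"
proof -
  have "inj_on (\<lambda>p. aff m (fst p) (snd p)) (UNIV \<times> Pow {0..<m})"
  proof (rule inj_onI)
    fix x y assume "x \<in> UNIV \<times> Pow {0..<m}" "y \<in> UNIV \<times> Pow {0..<m}"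
      "aff m (fst x) (snd x) = aff m (fst y) (snd y)"
    then have "fst x = fst y \<and> snd x = snd y" using aff_inj[of "snd x" m "snd y" "fst x" "fst y"] by auto
    then show "x = y" by (simp add: prod_eq_iff)
  qed
  then have "card (Aff m) = card ((UNIV::bool set) \<times> Pow {0..<(m::nat)})" unfolding Aff_def by (rule card_image)
  also have "\<dots> = 2 * 2^m" by (simp add: card_cartesian_product card_Pow)
  finally show ?thesis by simp
qed

lemma aff_four:
  assumes "finite \<alpha>" "distinct [p1,p2,p3,p4]" "p1 \<in> grid m" "p2 \<in> grid m" "p3 \<in> grid m" "p4 \<in> grid m"
    "\<And>k. (bit (zz m p1) k \<noteq> bit (zz m p2) k) = (bit (zz m p3) k \<noteq> bit (zz m p4) k)"
  shows "even (card {q\<in>{p1,p2,p3,p4}. aff m c \<alpha> q})"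
proof -
  have "oc \<alpha> (\<lambda>k. (bit (zz m p1) k \<noteq> bit (zz m p2) k) \<noteq> (bit (zz m p3) k \<noteq> bit (zz m p4) k)) = False"
    using assms(7) by simp
  moreover have "oc \<alpha> (\<lambda>k. (bit (zz m p1) k \<noteq> bit (zz m p2) k) \<noteq> (bit (zz m p3) k \<noteq> bit (zz m p4) k))
     = ((oc \<alpha> (bit (zz m p1)) \<noteq> oc \<alpha> (bit (zz m p2))) \<noteq> (oc \<alpha> (bit (zz m p3)) \<noteq> oc \<alpha> (bit (zz m p4))))"
    by (simp only: oc_xor[OF assms(1)])
  ultimately have "(oc \<alpha> (bit (zz m p1)) \<noteq> oc \<alpha> (bit (zz m p2))) = (oc \<alpha> (bit (zz m p3)) \<noteq> oc \<alpha> (bit (zz m p4)))"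
    by blast
  then show ?thesis using card4_even[OF assms(2)] assms(3-6) unfolding aff_def by auto
qed

lemma line_bits: fixes P T :: nat assumes "P = 2^r + 2*2^r*T"
  shows "(bit (P-1) k \<noteq> bit (P+1-1) k) = (bit (P+2*2^r-1) k \<noteq> bit (P+2*2^r+1-1) k)"
proof -
  have a1: "(P-1) mod 2^Suc r = 2^r - 1"
  proof -
    have "P - 1 = (2^r - 1) + 2^Suc r * T" using assms by simp
    then have "(P-1) mod 2^Suc r = ((2^r - 1) + 2^Suc r * T) mod 2^Suc r" by (simp only:)
    also have "\<dots> = (2^r - 1) mod 2^Suc r" by (rule mod_mult_self2)
    also have "\<dots> = 2^r - 1" by (rule mod_less, rule less_imp_diff_less) simp
    finally show ?thesis .
  qed
  have a2: "(P+2*2^r-1) mod 2^Suc r = 2^r - 1"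
  proof -
    have "P +2*2^r - 1 = (2^r - 1) + 2^Suc r * (T+1)" using assms by simp
    then have "(P +2*2^r - 1) mod 2^Suc r = ((2^r - 1) + 2^Suc r * (T+1)) mod 2^Suc r" by (simp only:)
    also have "\<dots> = (2^r - 1) mod 2^Suc r" by (rule mod_mult_self2)
    also have "\<dots> = 2^r - 1" by (rule mod_less, rule less_imp_diff_less) simp
    finally show ?thesis .
  qed
  have e1: "P + 1 - 1 = (P - 1) + 1" using assms by simp
  have e2: "P + 2*2^r + 1 - 1 = (P + 2*2^r - 1) + 1" using assms by simp
  show ?thesis unfolding e1 e2 using carry_bits[OF a1, of k] carry_bits[OF a2, of k] by simp
qed



lemma aff_line_top:
  fixes P T :: nat
  assumes "P = 2^r + 2*2^r*T" "P + 2*2^r + 1 \<le> 2^colexp m" "finite \<alpha>"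
  shows "even (card {q\<in>{(1,P),(1,P+1),(1,P+2*2^r),(1,P+2*2^r+1)}. aff m c \<alpha> q})"
proof (rule aff_four[OF assms(3)])
  have "0 < (2::nat)^r" by simp
  then have P1: "P \<ge> 1" using assms(1) by linarith
  show "distinct [(1::nat, P), (1, P + 1), (1, P + 2 * 2 ^ r), (1, P + 2 * 2 ^ r + 1)]" by simp
  have g: "(1, j) \<in> grid m" if "1 \<le> j" "j \<le> 2^colexp m" for j
    using that unfolding grid_def by simp
  show "(1, P) \<in> grid m" "(1, P+1) \<in> grid m" "(1, P + 2 * 2 ^ r) \<in> grid m" "(1, P + 2 * 2 ^ r + 1) \<in> grid m"
    using P1 assms(2) unfolding grid_def by auto
  note gg = this
  fix k
  show "(bit (zz m (1, P)) k \<noteq> bit (zz m (1, P + 1)) k) =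
         (bit (zz m (1, P + 2 * 2 ^ r)) k \<noteq> bit (zz m (1, P + 2 * 2 ^ r + 1)) k)"
    unfolding bit_zz[OF gg(1)] bit_zz[OF gg(2)] bit_zz[OF gg(3)] bit_zz[OF gg(4)]
    using line_bits[OF assms(1), of "k - rowexp m"] by simp
qed

lemma aff_line_left:
  fixes P T :: nat
  assumes "P = 2^r + 2*2^r*T" "P + 2*2^r + 1 \<le> 2^rowexp m" "finite \<alpha>"
  shows "even (card {q\<in>{(P,1),(P+1,1),(P+2*2^r,1),(P+2*2^r+1,1)}. aff m c \<alpha> q})"
proof (rule aff_four[OF assms(3)])
  have "0 < (2::nat)^r" by simp
  then have P1: "P \<ge> 1" using assms(1) by linarith
  show "distinct [(P,1::nat), (P + 1,1), (P + 2 * 2 ^ r,1), (P + 2 * 2 ^ r + 1,1)]" by simp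
  have g: "(j, 1) \<in> grid m" if "1 \<le> j" "j \<le> 2^rowexp m" for j
    using that unfolding grid_def by simp
  show "(P,1) \<in> grid m" "(P+1,1) \<in> grid m" "(P + 2 * 2 ^ r,1) \<in> grid m" "(P + 2 * 2 ^ r + 1,1) \<in> grid m"
    using P1 assms(2) unfolding grid_def by auto
  note gg = this
  fix k
  show "(bit (zz m (P,1)) k \<noteq> bit (zz m (P + 1,1)) k) =
         (bit (zz m (P + 2 * 2 ^ r,1)) k \<noteq> bit (zz m (P + 2 * 2 ^ r + 1,1)) k)"
    unfolding bit_zz[OF gg(1)] bit_zz[OF gg(2)] bit_zz[OF gg(3)] bit_zz[OF gg(4)]
    using line_bits[OF assms(1), of k] by simp
qed

lemma aff_bulk:
  assumes "1 \<le> i" "i < 2 ^ rowexp m" "1 \<le> j" "j < 2 ^ colexp m" "finite \<alpha>"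
  shows "even (card {q\<in>{(i,j),(i+1,j),(i,j+1),(i+1,j+1)}. aff m c \<alpha> q})"
proof (rule aff_four[OF assms(5)])
  show "distinct [(i,j),(i+1,j),(i,j+1),(i+1,j+1)]" by simp
  show "(i,j) \<in> grid m" "(i+1,j) \<in> grid m" "(i,j+1) \<in> grid m" "(i+1,j+1) \<in> grid m"
    using assms unfolding grid_def by auto
  note gg = this
  fix k
  show "(bit (zz m (i,j)) k \<noteq> bit (zz m (i+1,j)) k) = (bit (zz m (i,j+1)) k \<noteq> bit (zz m (i+1,j+1)) k)"
    unfolding bit_zz[OF gg(1)] bit_zz[OF gg(2)] bit_zz[OF gg(3)] bit_zz[OF gg(4)] by simp
qed

lemma aff_uRM: assumes "\<alpha> \<subseteq> {0..<m}" shows "aff m c \<alpha> \<in> uRM m"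
proof -
  have fa: "finite \<alpha>" using assms finite_subset by blast
  have "even (card {q\<in>S. aff m c \<alpha> q})" if S: "S \<in> checks m" for S
  proof -
    consider "S \<in> bulk_checks m" | "S \<in> (\<lambda>S. (\<lambda>j. (1::nat, j)) ` S) ` line_checks (colexp m)"
      | "S \<in> (\<lambda>S. (\<lambda>i. (i, 1::nat)) ` S) ` line_checks (rowexp m)"
      using S unfolding checks_def boundary_checks_def by blast
    then show ?thesis
    proof cases
      case 1 then show ?thesis unfolding bulk_checks_def using aff_bulk[OF _ _ _ _ fa] by auto
    next
      case 2
      then obtain s t where st: "S = (\<lambda>j. (1::nat, j)) ` S_set (colexp m) s t" "1 \<le> s" "s \<le> colexp m - 1"
        "- ((2::int) ^ colexp m div (2 * 2 ^ s)) + 1 \<le> t" "t \<le> (2::int) ^ colexp m div (2 * 2 ^ s) - 1"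
        unfolding line_checks_def by blast
      from S_set_explicit[OF st(2-5)] obtain r T where rt:
        "S_set (colexp m) s t = {2^r + 2*2^r*T, 2^r + 2*2^r*T + 1, 2^r + 2*2^r*T + 2*2^r, 2^r + 2*2^r*T + 2*2^r + 1}"
        "2^r + 2*2^r*T + 2*2^r + 1 \<le> (2::nat)^colexp m" by blast
      show ?thesis unfolding st(1) rt(1)
        using aff_line_top[OF refl rt(2) fa] by simp
    next
      case 3
      then obtain s t where st: "S = (\<lambda>i. (i, 1::nat)) ` S_set (rowexp m) s t" "1 \<le> s" "s \<le> rowexp m - 1"
        "- ((2::int) ^ rowexp m div (2 * 2 ^ s)) + 1 \<le> t" "t \<le> (2::int) ^ rowexp m div (2 * 2 ^ s) - 1"
        unfolding line_checks_def by blast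
      from S_set_explicit[OF st(2-5)] obtain r T where rt:
        "S_set (rowexp m) s t = {2^r + 2*2^r*T, 2^r + 2*2^r*T + 1, 2^r + 2*2^r*T + 2*2^r, 2^r + 2*2^r*T + 2*2^r + 1}"
        "2^r + 2*2^r*T + 2*2^r + 1 \<le> (2::nat)^rowexp m" by blast
      show ?thesis unfolding st(1) rt(1)
        using aff_line_left[OF refl rt(2) fa] by simp
    qed
  qed
  then show ?thesis unfolding uRM_def aff_def by auto
qed

lemma Aff_sub: "Aff m \<subseteq> uRM m"
  unfolding Aff_def using aff_uRM by auto

lemma checks_finite: "S \<in> checks m \<Longrightarrow> finite S"
  unfolding checks_def bulk_checks_def boundary_checks_def line_checks_def S_set_def Let_def by auto

lemma uRM_xor: assumes "x \<in> uRM m" "y \<in> uRM m" shows "(\<lambda>q. x q \<noteq> y q) \<in> uRM m"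
proof -
  have "even (card {q\<in>S. x q \<noteq> y q})" if "S \<in> checks m" for S
    using oc_xor[OF checks_finite[OF that], of x y] assms that unfolding oc_def uRM_def by auto
  then show ?thesis using assms unfolding uRM_def by auto
qed

lemma uRM_zero: "(\<lambda>_. False) \<in> uRM m" unfolding uRM_def by simp

lemma uRM_sum: assumes "finite J" "\<forall>j\<in>J. g j \<in> uRM m"
  shows "(\<lambda>q. odd (card {j\<in>J. g j q})) \<in> uRM m"
  using assms
proof (induction J rule: finite_induct)
  case empty then show ?case using uRM_zero by simp
next
  case (insert a F)
  have eq: "(\<lambda>q. odd (card {j\<in>insert a F. g j q})) = (\<lambda>q. g a q \<noteq> odd (card {j\<in>F. g j q}))"
    using insert(1,2) unfolding Collect_insert_if by (auto intro!: ext)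
  have "(\<lambda>q. g a q \<noteq> odd (card {j\<in>F. g j q})) \<in> uRM m"
    using uRM_xor[of "g a" m "\<lambda>q. odd (card {j\<in>F. g j q})"] insert.IH insert.prems by simp
  then show ?case unfolding eq .
qed



lemma bij_card_Collect: assumes "bij_betw f A B" shows "card {a\<in>A. P (f a)} = card {b\<in>B. P b}"
proof -
  have "bij_betw f {a\<in>A. P (f a)} {b\<in>B. P b}"
    using assms unfolding bij_betw_def inj_on_def by (auto simp: image_iff)
  then show ?thesis by (rule bij_betw_same_card)
qed

lemma xor_cancel: "xor (xor a b) b = (a::nat)"
  by (rule bit_eqI) (auto simp: bit_xor_iff)

lemma xor_lt: "a < 2^m \<Longrightarrow> b < 2^m \<Longrightarrow> xor a b < (2::nat)^m"
  by (metis take_bit_nat_eq_self_iff take_bit_xor)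

lemma bit_xor_fun: "bit (xor a b) = (\<lambda>k. bit (a::nat) k \<noteq> bit b k)"
  by (rule ext) (simp add: bit_xor_iff)

theorem lemma5:
  fixes m :: nat and bq :: "nat \<Rightarrow> nat \<times> nat" and K :: "nat set"
  assumes "m \<ge> 2"
    and "is_base m bq"
    and "K \<subseteq> {0..m}" and "card K = m - 1"
  shows "even (card {q \<in> grid m. K \<subseteq> parity_label m bq q})"
proof -
  let ?C = "uRM m"
  let ?r = "\<lambda>x. restrict (\<lambda>i. x (bq i)) {0..m}"
  have bij: "bij_betw ?r ?C ({0..m} \<rightarrow>\<^sub>E (UNIV::bool set))" using assms(2) unfolding is_base_def by blast
  have cardC: "card ?C = 2^(m+1)"
  proof -
    have "card ?C = card ({0..m} \<rightarrow>\<^sub>E (UNIV::bool set))" using bij_betw_same_card[OF bij] .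
    also have "\<dots> = 2^(m+1)" by (simp add: card_PiE)
    finally show ?thesis .
  qed
  have finC: "finite ?C"
  proof (rule ccontr)
    assume "infinite ?C"
    then have "card ?C = 0" by (rule card.infinite)
    with cardC show False by simp
  qed
  have cc: "card (Aff m) = card ?C" unfolding card_Aff cardC ..
  have CA: "?C = Aff m" using card_subset_eq[OF finC Aff_sub cc] by (rule sym)
  have surj: "?r ` ?C = {0..m} \<rightarrow>\<^sub>E UNIV" using bij_betw_imp_surj_on[OF bij] .
  have inj: "inj_on ?r ?C" using bij_betw_imp_inj_on[OF bij] .
  have "\<forall>j\<in>{0..m}. \<exists>x\<in>?C. ?r x = (\<lambda>i\<in>{0..m}. i = j)"
  proof
    fix j assume "j \<in> {0..m}"
    have "(\<lambda>i\<in>{0..m}. i = j) \<in> {0..m} \<rightarrow>\<^sub>E (UNIV::bool set)"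
      by (rule restrict_PiE_iff[THEN iffD2]) (rule ballI, rule UNIV_I)
    then obtain x where "x \<in> ?C" "(\<lambda>i\<in>{0..m}. i = j) = ?r x" unfolding surj[symmetric] by (rule imageE)
    then show "\<exists>x\<in>?C. ?r x = (\<lambda>i\<in>{0..m}. i = j)" by metis
  qed
  then obtain g where g: "\<forall>j\<in>{0..m}. g j \<in> ?C \<and> ?r (g j) = (\<lambda>i\<in>{0..m}. i = j)" by metis
  have gb: "g j (bq i) = (i = j)" if "i\<in>{0..m}" "j\<in>{0..m}" for i j
  proof -
    have "?r (g j) i = (\<lambda>i\<in>{0..m}. i = j) i" using g that(2) by simp
    then show ?thesis using that(1) by simp
  qed
  have eqC: "x = y" if "x\<in>?C" "y\<in>?C" "\<forall>i\<in>{0..m}. x (bq i) = y (bq i)" for x y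
  proof -
    have "?r x = ?r y" using that(3) by (intro ext) (simp add: restrict_def)
    then show ?thesis using inj_onD[OF inj _ that(1,2)] by simp
  qed
  have rep: "x q = odd (card {j\<in>{0..m}. x (bq j) \<and> g j q})" if xC: "x\<in>?C" for x q
  proof -
    define J where "J = {j\<in>{0..m}. x (bq j)}"
    define y where "y = (\<lambda>q. odd (card {j\<in>J. g j q}))"
    have fJ: "finite J" unfolding J_def by simp
    have yC: "y\<in>?C" unfolding y_def using uRM_sum[OF fJ, of g m] g unfolding J_def by auto
    have "y (bq i) = x (bq i)" if i: "i\<in>{0..m}" for i
    proof -
      have "{j\<in>J. g j (bq i)} = (if i \<in> J then {i} else {})"
        using gb[OF i] unfolding J_def by auto
      then show ?thesis unfolding y_def J_def using i by simp
    qed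
    then have "x = y" using eqC[OF xC yC] by simp
    then have "x q = odd (card {j\<in>J. g j q})" unfolding y_def by simp
    moreover have "{j\<in>J. g j q} = {j\<in>{0..m}. x (bq j) \<and> g j q}" unfolding J_def by auto
    ultimately show ?thesis by simp
  qed
  have lab: "parity_label m bq q = {j\<in>{0..m}. g j q}" for q
    unfolding parity_label_def
  proof (rule the_equality)
    have "{i\<in>{j\<in>{0..m}. g j q}. x (bq i)} = {j\<in>{0..m}. x (bq j) \<and> g j q}" for x by auto
    then show "{j\<in>{0..m}. g j q} \<subseteq> {0..m} \<and> (\<forall>x\<in>?C. x q = odd (card {i\<in>{j\<in>{0..m}. g j q}. x (bq i)}))"
      using rep by auto
  next
    fix L assume L: "L \<subseteq> {0..m} \<and> (\<forall>x\<in>?C. x q = odd (card {i\<in>L. x (bq i)}))"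
    have "j \<in> L \<longleftrightarrow> g j q" if j: "j \<in> {0..m}" for j
    proof -
      have e: "{i\<in>L. g j (bq i)} = (if j \<in> L then {j} else {})" using gb[OF _ j] L by auto
      have gC: "g j \<in> ?C" using g j by blast
      have "g j q = odd (card {i\<in>L. g j (bq i)})" using L gC by blast
      then show ?thesis unfolding e by (cases "j \<in> L") simp_all
    qed
    then show "L = {j\<in>{0..m}. g j q}" using L by auto
  qed
  have "\<forall>j\<in>K. \<exists>p. snd p \<subseteq> {0..<m} \<and> g j = aff m (fst p) (snd p)"
  proof
    fix j assume "j \<in> K"
    then have "g j \<in> Aff m" using g CA assms(3) by auto
    then obtain p where "p \<in> UNIV \<times> Pow {0..<m}" "g j = aff m (fst p) (snd p)"
      unfolding Aff_def by (rule imageE)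
    then show "\<exists>p. snd p \<subseteq> {0..<m} \<and> g j = aff m (fst p) (snd p)" by (intro exI[of _ p]) auto
  qed
  then obtain p where p: "\<forall>j\<in>K. snd (p j) \<subseteq> {0..<m} \<and> g j = aff m (fst (p j)) (snd (p j))" by metis
  define c where "c j = fst (p j)" for j
  define \<alpha> where "\<alpha> j = snd (p j)" for j
  have fa: "finite (\<alpha> j)" if "j \<in> K" for j using p that finite_subset unfolding \<alpha>_def by blast
  let ?Q = "\<lambda>z::nat. \<forall>j\<in>K. c j \<noteq> oc (\<alpha> j) (bit z)"
  have set_eq: "{q\<in>grid m. K \<subseteq> parity_label m bq q} = {q\<in>grid m. ?Q (zz m q)}"
  proof -
    have "K \<subseteq> parity_label m bq q \<longleftrightarrow> ?Q (zz m q)" if "q \<in> grid m" for q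
      using that p assms(3) unfolding lab c_def \<alpha>_def aff_def by auto
    then show ?thesis by auto
  qed
  have cardeq: "card {q\<in>grid m. K \<subseteq> parity_label m bq q} = card {z\<in>{0..<(2::nat)^m}. ?Q z}"
    unfolding set_eq by (rule bij_card_Collect[OF zz_bij])
  define \<phi> where "\<phi> z = restrict (\<lambda>j. oc (\<alpha> j) (bit (z::nat))) K" for z
  have fK: "finite K" using assms(3) finite_subset by blast
  have "\<not> inj_on \<phi> {0..<(2::nat)^m}"
  proof
    assume "inj_on \<phi> {0..<(2::nat)^m}"
    then have "card {0..<(2::nat)^m} \<le> card (K \<rightarrow>\<^sub>E (UNIV::bool set))"
      by (rule card_inj_on_le) (auto simp: \<phi>_def fK intro!: finite_PiE)
    also have "\<dots> = 2^(m-1)" using assms(4) fK by (simp add: card_PiE)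
    finally have "card {0..<(2::nat)^m} \<le> 2^(m-1)" .
    then have "(2::nat)^m \<le> 2^(m-1)" by (simp only: card_atLeastLessThan diff_zero)
    then have "m \<le> m - 1" by (rule power_le_imp_le_exp[rotated]) simp
    then show False using assms(1) by linarith
  qed
  then obtain z1 z2 where z: "z1 < 2^m" "z2 < 2^m" "z1 \<noteq> z2" "\<phi> z1 = \<phi> z2"
    unfolding inj_on_def by auto
  define u where "u = xor z1 z2"
  have u0: "u \<noteq> 0"
  proof
    assume "u = 0"
    then have "z1 = z2" using xor_cancel[of z1 z2] unfolding u_def by simp
    then show False using z(3) by simp
  qed
  have um: "u < 2^m" unfolding u_def using xor_lt z by simp
  have uo: "oc (\<alpha> j) (bit u) = False" if j: "j \<in> K" for j
  proof -
    have "oc (\<alpha> j) (bit z1) = oc (\<alpha> j) (bit z2)" using fun_cong[OF z(4), of j] j unfolding \<phi>_def by simp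
    then show ?thesis unfolding u_def bit_xor_fun oc_xor[OF fa[OF j]] by simp
  qed
  have "even (card {z\<in>{0..<(2::nat)^m}. ?Q z})"
  proof (rule even_involution[where \<sigma>="\<lambda>z. xor z u"])
    show "finite {z\<in>{0..<(2::nat)^m}. ?Q z}" by simp
    show "\<forall>z\<in>{z\<in>{0..<(2::nat)^m}. ?Q z}. xor z u \<in> {z\<in>{0..<(2::nat)^m}. ?Q z} \<and> xor z u \<noteq> z \<and> xor (xor z u) u = z"
    proof
      fix z assume zT: "z \<in> {z\<in>{0..<(2::nat)^m}. ?Q z}"
      have "xor z u < 2^m" using zT um xor_lt by simp
      moreover have "?Q (xor z u)"
      proof
        fix j assume j: "j \<in> K"
        have "oc (\<alpha> j) (bit (xor z u)) = oc (\<alpha> j) (bit z)"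
          unfolding bit_xor_fun oc_xor[OF fa[OF j]] using uo[OF j] by simp
        then show "c j \<noteq> oc (\<alpha> j) (bit (xor z u))" using zT j by simp
      qed
      moreover have "xor z u \<noteq> z"
      proof
        assume zu: "xor z u = z"
        have "u = xor (xor z u) z" by (rule bit_eqI) (auto simp: bit_xor_iff)
        then have "u = 0" unfolding zu by simp
        then show False using u0 by simp
      qed
      moreover have "xor (xor z u) u = z" by (rule xor_cancel)
      ultimately show "xor z u \<in> {z\<in>{0..<(2::nat)^m}. ?Q z} \<and> xor z u \<noteq> z \<and> xor (xor z u) u = z" by simp
    qed
  qed
  then show ?thesis using cardeq by simp
qed

end
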